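(* Fix $d,k\in\mathbb N$ and let $A\in\mathbb R^{d^k\times d^k}$. Let $x=x_1\otimes\cdots\otimes x_k$, where $x_1,\dots,x_k\in\mathbb R^d$ are independent and each $x_i$ is either a Rademacher vector or a standard Gaussian vector $\mathcal N(0,I_d)$. Let $\bar A:=\frac{1}{2^k}\sum_{\mathcal V\subseteq[k]}A^{\Gamma_{\mathcal V}}$ be the average of all partial transposes of $A$. Then $$\operatorname{Var}[x^\top A x]\le\sum_{\mathcal S\subsetneq[k]}2^{k-|\mathcal S|}\,\big\|\operatorname{tr}_{\mathcal S}(\bar A)\big\|_F^2 .$$ Furthermore, if all $x_i$ are $\mathcal N(0,I_d)$, this inequality is an equality.
   Context: $\otimes$ is the standard Kronecker product; $[k]=\{1,\dots,k\}$. A Rademacher vector has iid entries uniform on $\{\pm1\}$. Identify $\mathbb R^{d^k\times d^k}$ with $(\mathbb R^{d\times d})^{\otimes k}$ ("$k$ subsystems of dimension $d$"). Partial trace: for $\mathcal S\subseteq[k]$, $\operatorname{tr}_{\mathcal S}:\mathbb R^{d^k\times d^k}\to\mathbb R^{d^{k-|\mathcal S|}\times d^{k-|\mathcal S|}}$ is the unique linear map with $\operatorname{tr}_{\mathcal S}(M_1\otimes\cdots\otimes M_k)=\big(\prod_{j\in\mathcal S}\operatorname{tr}(M_j)\big)\bigotimes_{j\notin\mathcal S}M_j$ for all $M_j\in\mathbb R^{d\times d}$ (for $\mathcal S=\emptyset$ it is the identity). Equivalently, for a single index, $\operatorname{tr}_{\{i\}}(A)=\sum_{j=1}^d(I^{\otimes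 i-1}\otimes e_j\otimes I^{\otimes k-i})^\top A(I^{\otimes i-1}\otimes e_j\otimes I^{\otimes k-i})$, with $I=I_d$ and $e_j\in\mathbb R^d$ standard basis vectors. Partial transpose: for $\mathcal V\subseteq[k]$, $A\mapsto A^{\Gamma_{\mathcal V}}$ is the unique linear map with $(M_1\otimes\cdots\otimes M_k)^{\Gamma_{\mathcal V}}=N_1\otimes\cdots\otimes N_k$ where $N_j=M_j^\top$ if $j\in\mathcal V$ and $N_j=M_j$ otherwise. The sum over $\mathcal S\subsetneq[k]$ ranges over all proper subsets of $[k]$ (including $\emptyset$). *)

theory Defs
  imports "HOL-Probability.Probability"
begin

text \<open>Multi-indices of the k-fold tensor product of R^d: extensional functions
  from a set of subsystems (a subset of {1..k}) to {0..<d}. A matrix in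
  R^(d^k x d^k) = (R^(d x d))^(tensor k) is a function of a pair of such multi-indices.\<close>

definition midx :: "nat set \<Rightarrow> nat \<Rightarrow> (nat \<Rightarrow> nat) set" where
  "midx T d = PiE T (\<lambda>_. {..<d})"

definition ptranspose :: "nat set \<Rightarrow> ((nat \<Rightarrow> nat) \<Rightarrow> (nat \<Rightarrow> nat) \<Rightarrow> real)
    \<Rightarrow> (nat \<Rightarrow> nat) \<Rightarrow> (nat \<Rightarrow> nat) \<Rightarrow> real" where
  "ptranspose V A a b = A (\<lambda>j. if j \<in> V then b j else a j) (\<lambda>j. if j \<in> V then a j else b j)"

text \<open>Partial trace over the subsystems in S; the result is indexed by multi-indices
  on the remaining subsystems {1..k} - S.\<close>
definition ptrace :: "nat \<Rightarrow> nat set \<Rightarrow> ((nat \<Rightarrow> nat) \<Rightarrow> (nat \<Rightarrow> nat) \<Rightarrow> real)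
    \<Rightarrow> (nat \<Rightarrow> nat) \<Rightarrow> (nat \<Rightarrow> nat) \<Rightarrow> real" where
  "ptrace d S A a b = (\<Sum>c\<in>midx S d.
      A (\<lambda>j. if j \<in> S then c j else a j) (\<lambda>j. if j \<in> S then c j else b j))"

definition frob2 :: "nat \<Rightarrow> nat set \<Rightarrow> ((nat \<Rightarrow> nat) \<Rightarrow> (nat \<Rightarrow> nat) \<Rightarrow> real) \<Rightarrow> real" where
  "frob2 d T B = (\<Sum>a\<in>midx T d. \<Sum>b\<in>midx T d. (B a b)\<^sup>2)"

definition ptavg :: "nat \<Rightarrow> ((nat \<Rightarrow> nat) \<Rightarrow> (nat \<Rightarrow> nat) \<Rightarrow> real)
    \<Rightarrow> (nat \<Rightarrow> nat) \<Rightarrow> (nat \<Rightarrow> nat) \<Rightarrow> real" where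
  "ptavg k A a b = (1 / 2 ^ k) * (\<Sum>V\<in>Pow {1..k}. ptranspose V A a b)"

definition tquad :: "nat \<Rightarrow> nat \<Rightarrow> ((nat \<Rightarrow> nat) \<Rightarrow> (nat \<Rightarrow> nat) \<Rightarrow> real)
    \<Rightarrow> (nat \<Rightarrow> nat \<Rightarrow> real) \<Rightarrow> real" where
  "tquad d k A x = (\<Sum>a\<in>midx {1..k} d. \<Sum>b\<in>midx {1..k} d.
      A a b * (\<Prod>i\<in>{1..k}. x i (a i) * x i (b i)))"

definition rademacher_rv :: "'s measure \<Rightarrow> ('s \<Rightarrow> real) \<Rightarrow> bool" where
  "rademacher_rv M Y \<longleftrightarrow> Y \<in> borel_measurable M \<and>
     measure M {\<omega> \<in> space M. Y \<omega> = 1} = 1/2 \<and> measure M {\<omega> \<in> space M. Y \<omega> = -1} = 1/2"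

definition gaussian_rv :: "'s measure \<Rightarrow> ('s \<Rightarrow> real) \<Rightarrow> bool" where
  "gaussian_rv M Y \<longleftrightarrow> distributed M lborel Y std_normal_density"

end

theory Submission imports Defs begin

definition sw :: "nat set \<Rightarrow> (nat\<Rightarrow>nat) \<Rightarrow> (nat\<Rightarrow>nat) \<Rightarrow> (nat\<Rightarrow>nat)" where
  "sw R c e = (\<lambda>j. if j \<in> R then e j else c j)"

lemma finite_midx[simp]: "finite T \<Longrightarrow> finite (midx T d)"
  unfolding midx_def by (rule finite_PiE) auto

lemma sw_midx: "c \<in> midx I d \<Longrightarrow> e \<in> midx I d \<Longrightarrow> sw R c e \<in> midx I d"
  unfolding midx_def sw_def PiE_iff extensional_def by auto

lemma sw_sw1[simp]: "sw R (sw R c e) (sw R e c) = c"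
  unfolding sw_def by auto

lemma ptranspose_sw: "ptranspose V A a b = A (sw V a b) (sw V b a)"
  unfolding ptranspose_def sw_def ..

lemma swap_sum:
  fixes H :: "(nat\<Rightarrow>nat) \<Rightarrow> (nat\<Rightarrow>nat) \<Rightarrow> real"
  shows "(\<Sum>c\<in>midx I d. \<Sum>e\<in>midx I d. H c e) = (\<Sum>c\<in>midx I d. \<Sum>e\<in>midx I d. H (sw R c e) (sw R e c))"
proof -
  have "(\<Sum>c\<in>midx I d. \<Sum>e\<in>midx I d. H c e) = (\<Sum>(c,e)\<in>midx I d \<times> midx I d. H c e)"
    by (rule sum.cartesian_product)
  also have "\<dots> = (\<Sum>(c,e)\<in>midx I d \<times> midx I d. H (sw R c e) (sw R e c))"
    by (rule sum.reindex_bij_witness[where i="\<lambda>(c,e). (sw R c e, sw R e c)" and j="\<lambda>(c,e). (sw R c e, sw R e c)"])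
       (auto simp: sw_midx)
  also have "\<dots> = (\<Sum>c\<in>midx I d. \<Sum>e\<in>midx I d. H (sw R c e) (sw R e c))"
    by (rule sum.cartesian_product[symmetric])
  finally show ?thesis .
qed

lemma tquad_ptranspose: "tquad d k (ptranspose V A) x = tquad d k A x"
proof -
  have "tquad d k A x = (\<Sum>a\<in>midx {1..k} d. \<Sum>b\<in>midx {1..k} d.
      A (sw V a b) (sw V b a) * (\<Prod>i\<in>{1..k}. x i (sw V a b i) * x i (sw V b a i)))"
    unfolding tquad_def by (rule swap_sum)
  also have "\<dots> = tquad d k (ptranspose V A) x"
  proof -
    have "(\<Prod>i\<in>{1..k}. x i (sw V a b i) * x i (sw V b a i)) = (\<Prod>i\<in>{1..k}. x i (a i) * x i (b i))" for a b
      by (intro prod.cong refl) (auto simp: sw_def mult.commute)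
    then show ?thesis unfolding tquad_def ptranspose_sw by simp
  qed
  finally show ?thesis by simp
qed

lemma tquad_lin: "tquad d k (\<lambda>a b. r * (\<Sum>V\<in>P. F V a b)) x = r * (\<Sum>V\<in>P. tquad d k (F V) x)"
  unfolding tquad_def
  by (simp add: sum_distrib_left sum_distrib_right mult.assoc sum.swap[of _ P])

lemma tquad_ptavg: "tquad d k (ptavg k A) x = tquad d k A x"
proof -
  have "tquad d k (ptavg k A) x = (1/2^k) * (\<Sum>V\<in>Pow {1..k}. tquad d k (ptranspose V A) x)"
    unfolding ptavg_def[abs_def] by (rule tquad_lin)
  also have "\<dots> = tquad d k A x"
    by (simp add: tquad_ptranspose card_Pow)
  finally show ?thesis .
qed

lemma ptranspose_comp: "ptranspose R (ptranspose V A) = ptranspose ((V - R) \<union> (R - V)) A"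
  unfolding ptranspose_def by (intro ext arg_cong2[where f=A]) auto

lemma ptavg_inv:
  assumes "R \<subseteq> {1..k}"
  shows "ptranspose R (ptavg k A) = ptavg k A"
proof (intro ext)
  fix a b
  have "ptranspose R (ptavg k A) a b = (1/2^k) * (\<Sum>V\<in>Pow {1..k}. ptranspose R (ptranspose V A) a b)"
    unfolding ptavg_def ptranspose_def by simp
  also have "\<dots> = (1/2^k) * (\<Sum>V\<in>Pow {1..k}. ptranspose ((V - R) \<union> (R - V)) A a b)"
    by (simp add: ptranspose_comp)
  also have "(\<Sum>V\<in>Pow {1..k}. ptranspose ((V - R) \<union> (R - V)) A a b) = (\<Sum>V\<in>Pow {1..k}. ptranspose V A a b)"
    by (rule sum.reindex_bij_witness[where i="\<lambda>V. (V - R) \<union> (R - V)" and j="\<lambda>V. (V - R) \<union> (R - V)"])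
       (use assms in auto)
  finally show "ptranspose R (ptavg k A) a b = ptavg k A a b" unfolding ptavg_def by simp
qed


lemma ptrace_sw: "ptrace d S B a' b' = (\<Sum>u\<in>midx S d. B (sw S a' u) (sw S b' u))"
  unfolding ptrace_def sw_def ..

lemma sw_mem: "S \<subseteq> I \<Longrightarrow> a' \<in> midx (I-S) d \<Longrightarrow> u \<in> midx S d \<Longrightarrow> sw S a' u \<in> midx I d"
  unfolding midx_def sw_def PiE_iff extensional_def by auto

lemma restrict_mem: "a \<in> midx I d \<Longrightarrow> T \<subseteq> I \<Longrightarrow> restrict a T \<in> midx T d"
  unfolding midx_def by auto

lemma step_ii:
  fixes B :: "(nat\<Rightarrow>nat) \<Rightarrow> (nat\<Rightarrow>nat) \<Rightarrow> real" and g :: "nat \<Rightarrow> nat \<Rightarrow> nat \<Rightarrow> real"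
  assumes "finite I" "S \<subseteq> I"
  shows "(\<Sum>(a,b,c,e)\<in>midx I d \<times> midx I d \<times> midx I d \<times> midx I d.
            B a b * B c e * (\<Prod>i\<in>I-S. g i (a i) (b i)) *
            of_bool ((\<forall>i\<in>S. a i = b i \<and> c i = e i) \<and> (\<forall>i\<in>I-S. a i = c i \<and> b i = e i)))
       = (\<Sum>a'\<in>midx (I-S) d. \<Sum>b'\<in>midx (I-S) d. (ptrace d S B a' b')\<^sup>2 * (\<Prod>i\<in>I-S. g i (a' i) (b' i)))"
    (is "?L = ?R")
proof -
  let ?M = "midx I d" and ?MT = "midx (I-S) d" and ?MS = "midx S d"
  have fin: "finite ?M" "finite ?MT" "finite ?MS" using assms finite_subset[OF assms(2) assms(1)] by auto
  define F where "F = (\<lambda>(a,b,c,e). B a b * B c e * (\<Prod>i\<in>I-S. g i (a i) (b i)))"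
  define C where "C = (\<lambda>(a::nat\<Rightarrow>nat,b::nat\<Rightarrow>nat,c::nat\<Rightarrow>nat,e::nat\<Rightarrow>nat). (\<forall>i\<in>S. a i = b i \<and> c i = e i) \<and> (\<forall>i\<in>I-S. a i = c i \<and> b i = e i))"
  have "?L = (\<Sum>x\<in>?M \<times> ?M \<times> ?M \<times> ?M. if C x then F x else 0)"
    by (intro sum.cong refl) (auto simp: F_def C_def)
  also have "\<dots> = (\<Sum>x\<in>{x\<in>?M \<times> ?M \<times> ?M \<times> ?M. C x}. F x)"
    by (rule sum.inter_filter[symmetric]) (use fin in auto)
  also have "\<dots> = (\<Sum>(a',b',u,v)\<in>?MT \<times> ?MT \<times> ?MS \<times> ?MS.
        B (sw S a' u) (sw S b' u) * B (sw S a' v) (sw S b' v) * (\<Prod>i\<in>I-S. g i (a' i) (b' i)))"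
  proof -
    have "(\<Sum>(a',b',u,v)\<in>?MT \<times> ?MT \<times> ?MS \<times> ?MS.
        B (sw S a' u) (sw S b' u) * B (sw S a' v) (sw S b' v) * (\<Prod>i\<in>I-S. g i (a' i) (b' i)))
      = (\<Sum>x\<in>{x\<in>?M \<times> ?M \<times> ?M \<times> ?M. C x}. F x)"
    proof (rule sum.reindex_bij_witness[where j="\<lambda>(a',b',u,v). (sw S a' u, sw S b' u, sw S a' v, sw S b' v)"
         and i="\<lambda>(a,b,c,e). (restrict a (I-S), restrict b (I-S), restrict a S, restrict c S)"], goal_cases)
      case (1 y)
      then obtain a' b' u v where y: "y = (a',b',u,v)" "a' \<in> ?MT" "b' \<in> ?MT" "u \<in> ?MS" "v \<in> ?MS" by auto
      then show ?case
        unfolding midx_def sw_def PiE_iff extensional_def by (auto simp: fun_eq_iff)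
    next
      case (2 y)
      then obtain a' b' u v where y: "y = (a',b',u,v)" "a' \<in> ?MT" "b' \<in> ?MT" "u \<in> ?MS" "v \<in> ?MS" by auto
      then show ?case
        using assms(2) by (auto simp: C_def sw_mem) (auto simp: sw_def)
    next
      case (3 x)
      then obtain a b c e where x: "x = (a,b,c,e)" "a \<in> ?M" "b \<in> ?M" "c \<in> ?M" "e \<in> ?M" "C (a,b,c,e)" by auto
      then show ?case
        using assms(2) unfolding midx_def sw_def PiE_iff extensional_def C_def by (auto simp: fun_eq_iff)
    next
      case (4 x)
      then obtain a b c e where x: "x = (a,b,c,e)" "a \<in> ?M" "b \<in> ?M" "c \<in> ?M" "e \<in> ?M" "C (a,b,c,e)" by auto
      then show ?case
        using assms(2) by (auto simp: restrict_mem)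
    next
      case (5 y)
      then obtain a' b' u v where y: "y = (a',b',u,v)" "a' \<in> ?MT" "b' \<in> ?MT" "u \<in> ?MS" "v \<in> ?MS" by auto
      then show ?case
        by (auto simp: F_def sw_def intro!: prod.cong)
    qed
    then show ?thesis by simp
  qed
  also have "\<dots> = (\<Sum>a'\<in>?MT. \<Sum>b'\<in>?MT. \<Sum>u\<in>?MS. \<Sum>v\<in>?MS.
        B (sw S a' u) (sw S b' u) * B (sw S a' v) (sw S b' v) * (\<Prod>i\<in>I-S. g i (a' i) (b' i)))"
    by (simp add: sum.cartesian_product)
  also have "\<dots> = ?R"
    unfolding ptrace_sw power2_eq_square sum_product unfolding sum_distrib_right ..
  finally show ?thesis .
qed


lemma prod_of_bool: "finite A \<Longrightarrow> (\<Prod>i\<in>A. (of_bool (P i)::real)) = of_bool (\<forall>i\<in>A. P i)"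
  by (induction A rule: finite_induct) auto

lemma swap_sum4:
  fixes H :: "(nat\<Rightarrow>nat) \<Rightarrow> (nat\<Rightarrow>nat) \<Rightarrow> (nat\<Rightarrow>nat) \<Rightarrow> (nat\<Rightarrow>nat) \<Rightarrow> real"
  shows "(\<Sum>(a,b,c,e)\<in>midx I d \<times> midx I d \<times> midx I d \<times> midx I d. H a b c e)
     = (\<Sum>(a,b,c,e)\<in>midx I d \<times> midx I d \<times> midx I d \<times> midx I d. H a b (sw R c e) (sw R e c))"
  by (rule sum.reindex_bij_witness[where i="\<lambda>(a,b,c,e). (a,b,sw R c e, sw R e c)" and j="\<lambda>(a,b,c,e). (a,b,sw R c e, sw R e c)"])
     (auto simp: sw_midx)

lemma term_SW:
  fixes B :: "(nat\<Rightarrow>nat) \<Rightarrow> (nat\<Rightarrow>nat) \<Rightarrow> real" and g :: "nat \<Rightarrow> nat \<Rightarrow> nat \<Rightarrow> real"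
  assumes I: "finite I" and S: "S \<subseteq> I" and W: "W \<subseteq> I - S"
    and inv: "\<And>R. R \<subseteq> I \<Longrightarrow> ptranspose R B = B"
  shows "(\<Sum>(a,b,c,e)\<in>midx I d \<times> midx I d \<times> midx I d \<times> midx I d.
            B a b * B c e * ((\<Prod>i\<in>S. of_bool (a i = b i \<and> c i = e i)) *
              ((\<Prod>i\<in>W. g i (a i) (b i) * of_bool (a i = c i \<and> b i = e i)) *
               (\<Prod>i\<in>I - S - W. g i (a i) (b i) * of_bool (a i = e i \<and> b i = c i)))))
       = (\<Sum>a'\<in>midx (I-S) d. \<Sum>b'\<in>midx (I-S) d. (ptrace d S B a' b')\<^sup>2 * (\<Prod>i\<in>I-S. g i (a' i) (b' i)))"
proof -
  define R where "R = I - S - W"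
  have finS: "finite S" and finR: "finite R"
    using I S W unfolding R_def by (auto intro: finite_subset)
  have finW: "finite W" using W I by (meson Diff_subset finite_subset subset_trans)
  have TWR: "I - S = W \<union> R" "W \<inter> R = {}" using W unfolding R_def by auto
  have RI: "R \<subseteq> I" unfolding R_def by auto
  have invR: "B (sw R c e) (sw R e c) = B c e" for c e
    using inv[OF RI] by (metis ptranspose_sw)
  let ?Q = "midx I d \<times> midx I d \<times> midx I d \<times> midx I d"
  have pw: "B a b * B c e * ((\<Prod>i\<in>S. of_bool (a i = b i \<and> c i = e i)) *
              ((\<Prod>i\<in>W. g i (a i) (b i) * of_bool (a i = c i \<and> b i = e i)) *
               (\<Prod>i\<in>R. g i (a i) (b i) * of_bool (a i = e i \<and> b i = c i))))
      = B a b * B c e * (\<Prod>i\<in>I-S. g i (a i) (b i)) *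
         of_bool ((\<forall>i\<in>S. a i = b i \<and> c i = e i) \<and> (\<forall>i\<in>W. a i = c i \<and> b i = e i) \<and> (\<forall>i\<in>R. a i = e i \<and> b i = c i))"
    for a b c e
    by (simp add: prod.distrib prod_of_bool finS finW finR TWR prod.union_disjoint)
  have "(\<Sum>(a,b,c,e)\<in>?Q.
            B a b * B c e * ((\<Prod>i\<in>S. of_bool (a i = b i \<and> c i = e i)) *
              ((\<Prod>i\<in>W. g i (a i) (b i) * of_bool (a i = c i \<and> b i = e i)) *
               (\<Prod>i\<in>I - S - W. g i (a i) (b i) * of_bool (a i = e i \<and> b i = c i)))))
      = (\<Sum>(a,b,c,e)\<in>?Q. B a b * B c e * (\<Prod>i\<in>I-S. g i (a i) (b i)) *
         of_bool ((\<forall>i\<in>S. a i = b i \<and> c i = e i) \<and> (\<forall>i\<in>W. a i = c i \<and> b i = e i) \<and> (\<forall>i\<in>R. a i = e i \<and> b i = c i)))"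
    unfolding R_def[symmetric] pw ..
  also have "\<dots> = (\<Sum>(a,b,c,e)\<in>?Q. B a b * B (sw R c e) (sw R e c) * (\<Prod>i\<in>I-S. g i (a i) (b i)) *
         of_bool ((\<forall>i\<in>S. a i = b i \<and> sw R c e i = sw R e c i) \<and> (\<forall>i\<in>W. a i = sw R c e i \<and> b i = sw R e c i)
            \<and> (\<forall>i\<in>R. a i = sw R e c i \<and> b i = sw R c e i)))"
    by (rule swap_sum4)
  also have "\<dots> = (\<Sum>(a,b,c,e)\<in>?Q. B a b * B c e * (\<Prod>i\<in>I-S. g i (a i) (b i)) *
         of_bool ((\<forall>i\<in>S. a i = b i \<and> c i = e i) \<and> (\<forall>i\<in>I-S. a i = c i \<and> b i = e i)))"
  proof -
    have "((\<forall>i\<in>S. a i = b i \<and> sw R c e i = sw R e c i) \<and> (\<forall>i\<in>W. a i = sw R c e i \<and> b i = sw R e c i)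
            \<and> (\<forall>i\<in>R. a i = sw R e c i \<and> b i = sw R c e i)) =
          ((\<forall>i\<in>S. a i = b i \<and> c i = e i) \<and> (\<forall>i\<in>I-S. a i = c i \<and> b i = e i))" for a b c e
      using TWR unfolding sw_def R_def by auto
    then show ?thesis by (simp add: invR)
  qed
  also have "\<dots> = (\<Sum>a'\<in>midx (I-S) d. \<Sum>b'\<in>midx (I-S) d. (ptrace d S B a' b')\<^sup>2 * (\<Prod>i\<in>I-S. g i (a' i) (b' i)))"
    by (rule step_ii[OF I S])
  finally show ?thesis .
qed

definition mm :: "(nat \<Rightarrow> nat \<Rightarrow> nat \<Rightarrow> real) \<Rightarrow> nat \<Rightarrow> nat \<Rightarrow> nat \<Rightarrow> nat \<Rightarrow> nat \<Rightarrow> real" where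
  "mm g i p q r s = of_bool (p = q \<and> r = s) + g i p q * (of_bool (p = r \<and> q = s) + of_bool (p = s \<and> q = r))"

definition Wt :: "nat \<Rightarrow> nat set \<Rightarrow> nat set \<Rightarrow> ((nat\<Rightarrow>nat) \<Rightarrow> (nat\<Rightarrow>nat) \<Rightarrow> real) \<Rightarrow> (nat \<Rightarrow> nat \<Rightarrow> nat \<Rightarrow> real) \<Rightarrow> real" where
  "Wt d I S B g = (\<Sum>a'\<in>midx (I-S) d. \<Sum>b'\<in>midx (I-S) d. (ptrace d S B a' b')\<^sup>2 * (\<Prod>i\<in>I-S. g i (a' i) (b' i)))"

lemma expand:
  fixes B :: "(nat\<Rightarrow>nat) \<Rightarrow> (nat\<Rightarrow>nat) \<Rightarrow> real" and g :: "nat \<Rightarrow> nat \<Rightarrow> nat \<Rightarrow> real"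
  assumes I: "finite I" and inv: "\<And>R. R \<subseteq> I \<Longrightarrow> ptranspose R B = B"
  shows "(\<Sum>(a,b,c,e)\<in>midx I d \<times> midx I d \<times> midx I d \<times> midx I d.
            B a b * B c e * (\<Prod>i\<in>I. mm g i (a i) (b i) (c i) (e i)))
       = (\<Sum>S\<in>Pow I. 2 ^ card (I - S) * Wt d I S B g)"
proof -
  let ?Q = "midx I d \<times> midx I d \<times> midx I d \<times> midx I d"
  let ?F = "\<lambda>S W a b c e. B a b * B c e * ((\<Prod>i\<in>S. of_bool (a i = b i \<and> c i = e i)) *
              ((\<Prod>i\<in>W. g i (a i) (b i) * of_bool (a i = c i \<and> b i = e i)) *
               (\<Prod>i\<in>I - S - W. g i (a i) (b i) * of_bool (a i = e i \<and> b i = c i))))"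
  have pe: "B a b * B c e * (\<Prod>i\<in>I. mm g i (a i) (b i) (c i) (e i)) = (\<Sum>S\<in>Pow I. \<Sum>W\<in>Pow (I-S). ?F S W a b c e)" for a b c e
  proof -
    have "(\<Prod>i\<in>I. mm g i (a i) (b i) (c i) (e i)) = (\<Prod>i\<in>I. of_bool (a i = b i \<and> c i = e i) +
          (g i (a i) (b i) * of_bool (a i = c i \<and> b i = e i) + g i (a i) (b i) * of_bool (a i = e i \<and> b i = c i)))"
      unfolding mm_def by (intro prod.cong refl) (auto simp: algebra_simps)
    also have "\<dots> = (\<Sum>S\<in>Pow I. (\<Prod>i\<in>S. of_bool (a i = b i \<and> c i = e i)) *
        (\<Prod>i\<in>I-S. g i (a i) (b i) * of_bool (a i = c i \<and> b i = e i) + g i (a i) (b i) * of_bool (a i = e i \<and> b i = c i)))"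
      by (rule prod_add[OF I])
    also have "\<dots> = (\<Sum>S\<in>Pow I. (\<Prod>i\<in>S. of_bool (a i = b i \<and> c i = e i)) *
        (\<Sum>W\<in>Pow (I-S). (\<Prod>i\<in>W. g i (a i) (b i) * of_bool (a i = c i \<and> b i = e i)) *
               (\<Prod>i\<in>I - S - W. g i (a i) (b i) * of_bool (a i = e i \<and> b i = c i))))"
      using I by (intro sum.cong refl arg_cong2[where f="(*)"] prod_add) auto
    finally show ?thesis by (simp add: sum_distrib_left)
  qed
  have "(\<Sum>(a,b,c,e)\<in>?Q. B a b * B c e * (\<Prod>i\<in>I. mm g i (a i) (b i) (c i) (e i)))
      = (\<Sum>(a,b,c,e)\<in>?Q. \<Sum>S\<in>Pow I. \<Sum>W\<in>Pow (I-S). ?F S W a b c e)"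
    by (simp only: pe)
  also have "\<dots> = (\<Sum>S\<in>Pow I. \<Sum>W\<in>Pow (I-S). \<Sum>(a,b,c,e)\<in>?Q. ?F S W a b c e)"
    by (subst sum.swap) (simp add: split_def sum.swap[of _ "Pow _"])
  also have "\<dots> = (\<Sum>S\<in>Pow I. \<Sum>W\<in>Pow (I-S). Wt d I S B g)"
    unfolding Wt_def using I inv by (intro sum.cong refl term_SW) auto
  also have "\<dots> = (\<Sum>S\<in>Pow I. 2 ^ card (I - S) * Wt d I S B g)"
    using I by (simp add: card_Pow)
  finally show ?thesis .
qed


lemma L4:
  fixes \<mu> :: "nat \<Rightarrow> real" and p q r s d :: nat
  assumes "\<mu> 0 = 1" "\<mu> 1 = 0" "\<mu> 2 = 1" "\<mu> 3 = 0" "p < d" "q < d" "r < d" "s < d"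
  shows "(\<Prod>j<d. \<mu> (length (filter (\<lambda>x. x = j) [p,q,r,s]))) =
     of_bool (p=q \<and> r=s) + of_bool (p=r \<and> q=s) + of_bool (p=s \<and> q=r) + (\<mu> 4 - 3) * of_bool (p=q \<and> q=r \<and> r=s)"
proof -
  have "(\<Prod>j<d. \<mu> (length (filter (\<lambda>x. x = j) [p,q,r,s]))) = (\<Prod>j\<in>{p,q,r,s}. \<mu> (length (filter (\<lambda>x. x = j) [p,q,r,s])))"
    using assms by (intro prod.mono_neutral_right) auto
  also have "\<dots> = of_bool (p=q \<and> r=s) + of_bool (p=r \<and> q=s) + of_bool (p=s \<and> q=r) + (\<mu> 4 - 3) * of_bool (p=q \<and> q=r \<and> r=s)"
    using assms(1-4)
    by (cases "p=q"; cases "p=r"; cases "p=s"; cases "q=r"; cases "q=s"; cases "r=s") (simp_all add: numeral_eq_Suc insert_commute)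
  finally show ?thesis .
qed

lemma L2:
  fixes \<mu> :: "nat \<Rightarrow> real" and p q d :: nat
  assumes "\<mu> 0 = 1" "\<mu> 1 = 0" "\<mu> 2 = 1" "p < d" "q < d"
  shows "(\<Prod>j<d. \<mu> (length (filter (\<lambda>x. x = j) [p,q]))) = of_bool (p=q)"
proof -
  have "(\<Prod>j<d. \<mu> (length (filter (\<lambda>x. x = j) [p,q]))) = (\<Prod>j\<in>{p,q}. \<mu> (length (filter (\<lambda>x. x = j) [p,q])))"
    using assms by (intro prod.mono_neutral_right) auto
  also have "\<dots> = of_bool (p=q)"
    using assms(1-3) by (cases "p=q") (simp_all add: numeral_eq_Suc)
  finally show ?thesis .
qed

lemma prodlist_pow:
  fixes x :: "nat \<Rightarrow> real"
  assumes "\<forall>t\<in>set ts. t i < d"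
  shows "prod_list (map (\<lambda>t. x (t i)) ts) = (\<Prod>j<d. x j ^ length (filter (\<lambda>t. t i = j) ts))"
  using assms
proof (induction ts)
  case Nil then show ?case by simp
next
  case (Cons t ts)
  have "(\<Prod>j<d. x j ^ length (filter (\<lambda>t. t i = j) (t # ts))) =
        (\<Prod>j<d. (if t i = j then x j else 1) * x j ^ length (filter (\<lambda>t. t i = j) ts))"
    by (intro prod.cong refl) auto
  also have "\<dots> = (\<Prod>j<d. (if t i = j then x j else 1)) * (\<Prod>j<d. x j ^ length (filter (\<lambda>t. t i = j) ts))"
    by (rule prod.distrib)
  also have "(\<Prod>j<d. (if t i = j then x j else 1)) = x (t i)"
    using Cons.prems by (subst prod.delta') auto
  finally show ?case using Cons by simp
qed

definition gmom :: "nat \<Rightarrow> real" where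
  "gmom n = (if even n then fact n / (2 ^ (n div 2) * fact (n div 2)) else 0)"
definition rmom :: "nat \<Rightarrow> real" where
  "rmom n = (if even n then 1 else 0)"

lemma gmom_vals: "gmom 0 = 1" "gmom 1 = 0" "gmom 2 = 1" "gmom 3 = 0" "gmom 4 = 3"
  by (simp_all add: gmom_def fact_numeral)
lemma rmom_vals: "rmom 0 = 1" "rmom 1 = 0" "rmom 2 = 1" "rmom 3 = 0" "rmom 4 = 1"
  by (simp_all add: rmom_def)

context prob_space begin

lemma gauss_moment:
  assumes "gaussian_rv M Y"
  shows "integrable M (\<lambda>\<omega>. Y \<omega> ^ n) \<and> expectation (\<lambda>\<omega>. Y \<omega> ^ n) = gmom n"
proof
  have D: "distributed M lborel Y std_normal_density" using assms unfolding gaussian_rv_def .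
  show "integrable M (\<lambda>\<omega>. Y \<omega> ^ n)"
    using distributed_integrable[OF D, of "\<lambda>x. x ^ n"] integrable_std_normal_moment[of n]
    by (auto simp: normal_density_nonneg)
  have "expectation (\<lambda>\<omega>. Y \<omega> ^ n) = (\<integral>x. std_normal_density x * x ^ n \<partial>lborel)"
    using distributed_integral[OF D, of "\<lambda>x. x ^ n"] by (auto simp: normal_density_nonneg)
  also have "\<dots> = gmom n"
  proof (cases "even n")
    case True
    then obtain m where "n = 2 * m" by auto
    then show ?thesis using integral_std_normal_moment_even[of m] by (simp add: gmom_def)
  next
    case False
    then obtain m where "n = 2 * m + 1" using oddE by blast
    then show ?thesis using integral_std_normal_moment_odd[of m] by (simp add: gmom_def)
  qed
  finally show "expectation (\<lambda>\<omega>. Y \<omega> ^ n) = gmom n" .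
qed

lemma rad_moment:
  assumes "rademacher_rv M Y"
  shows "integrable M (\<lambda>\<omega>. Y \<omega> ^ n) \<and> expectation (\<lambda>\<omega>. Y \<omega> ^ n) = rmom n"
proof -
  have Ym[measurable]: "Y \<in> borel_measurable M" and p1: "prob {\<omega> \<in> space M. Y \<omega> = 1} = 1/2"
    and p2: "prob {\<omega> \<in> space M. Y \<omega> = -1} = 1/2" using assms unfolding rademacher_rv_def by auto
  define E1 where "E1 = {\<omega> \<in> space M. Y \<omega> = 1}"
  define E2 where "E2 = {\<omega> \<in> space M. Y \<omega> = -1}"
  have E[measurable]: "E1 \<in> events" "E2 \<in> events" unfolding E1_def E2_def by measurable
  have "prob (E1 \<union> E2) = prob E1 + prob E2"
    by (rule finite_measure_Union) (auto simp: E1_def E2_def)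
  then have "prob (E1 \<union> E2) = 1" using p1 p2 unfolding E1_def E2_def by simp
  then have "AE \<omega> in M. \<omega> \<in> E1 \<union> E2" using AE_in_set_eq_1[of "E1 \<union> E2"] E by auto
  then have AEY: "AE \<omega> in M. Y \<omega> = 1 \<or> Y \<omega> = -1" by eventually_elim (auto simp: E1_def E2_def)
  have int: "integrable M (\<lambda>\<omega>. Y \<omega> ^ n)"
  proof (rule integrable_const_bound[where B=1])
    show "AE x in M. norm (Y x ^ n) \<le> 1" using AEY by eventually_elim (auto simp: abs_power_minus)
  qed measurable
  show ?thesis
  proof (cases "even n")
    case True
    have "expectation (\<lambda>\<omega>. Y \<omega> ^ n) = expectation (\<lambda>\<omega>. 1)"
      by (rule integral_cong_AE) (use AEY True in \<open>auto elim!: eventually_mono\<close>)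
    then show ?thesis using int True by (simp add: rmom_def prob_space)
  next
    case False
    have "expectation (\<lambda>\<omega>. Y \<omega> ^ n) = expectation (\<lambda>\<omega>. indicator E1 \<omega> - indicator E2 \<omega>)"
      by (rule integral_cong_AE) (use AEY False in \<open>auto elim!: eventually_mono simp: E1_def E2_def indicator_def\<close>)
    also have "\<dots> = prob E1 - prob E2"
      by (subst Bochner_Integration.integral_diff) (auto simp: E emeasure_eq_measure)
    finally show ?thesis using int False p1 p2 by (simp add: rmom_def E1_def E2_def)
  qed
qed

end

context prob_space begin

lemma joint_moment:
  fixes X :: "nat \<Rightarrow> nat \<Rightarrow> 'a \<Rightarrow> real"
  assumes fin: "finite I"
    and indep: "indep_vars (\<lambda>_. borel) (\<lambda>p. X (fst p) (snd p)) (I \<times> {..<d})"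
    and mom: "\<And>i j n. i\<in>I \<Longrightarrow> j<d \<Longrightarrow> integrable M (\<lambda>\<omega>. X i j \<omega> ^ n) \<and> expectation (\<lambda>\<omega>. X i j \<omega> ^ n) = \<mu> i n"
    and ts: "\<forall>t\<in>set ts. \<forall>i\<in>I. t i < d"
  shows "integrable M (\<lambda>\<omega>. \<Prod>i\<in>I. prod_list (map (\<lambda>t. X i (t i) \<omega>) ts)) \<and>
         expectation (\<lambda>\<omega>. \<Prod>i\<in>I. prod_list (map (\<lambda>t. X i (t i) \<omega>) ts)) =
           (\<Prod>i\<in>I. \<Prod>j<d. \<mu> i (length (filter (\<lambda>t. t i = j) ts)))"
proof -
  define c where "c = (\<lambda>i j. length (filter (\<lambda>t. t i = j) ts))"
  have eq: "(\<Prod>i\<in>I. prod_list (map (\<lambda>t. X i (t i) \<omega>) ts)) = (\<Prod>p\<in>I\<times>{..<d}. X (fst p) (snd p) \<omega> ^ c (fst p) (snd p))" for \<omega>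
  proof -
    have "prod_list (map (\<lambda>t. X i (t i) \<omega>) ts) = (\<Prod>j<d. X i j \<omega> ^ c i j)" if "i \<in> I" for i
      using prodlist_pow[of ts i d "\<lambda>j. X i j \<omega>"] ts that unfolding c_def by auto
    then have "(\<Prod>i\<in>I. prod_list (map (\<lambda>t. X i (t i) \<omega>) ts)) = (\<Prod>i\<in>I. \<Prod>j<d. X i j \<omega> ^ c i j)"
      by (intro prod.cong refl) auto
    also have "\<dots> = (\<Prod>p\<in>I\<times>{..<d}. X (fst p) (snd p) \<omega> ^ c (fst p) (snd p))"
      by (simp add: prod.cartesian_product split_def)
    finally show ?thesis .
  qed
  have ind2: "indep_vars (\<lambda>_. borel) (\<lambda>p \<omega>. (\<lambda>x. x ^ c (fst p) (snd p)) (X (fst p) (snd p) \<omega>)) (I\<times>{..<d})"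
    by (rule indep_vars_compose2[OF indep]) measurable
  have intp: "integrable M (\<lambda>\<omega>. X (fst p) (snd p) \<omega> ^ c (fst p) (snd p))" if "p \<in> I\<times>{..<d}" for p
    using mom[of "fst p" "snd p"] that by auto
  have finP: "finite (I\<times>{..<d})" using fin by auto
  have "integrable M (\<lambda>\<omega>. \<Prod>p\<in>I\<times>{..<d}. X (fst p) (snd p) \<omega> ^ c (fst p) (snd p))"
    by (rule indep_vars_integrable[OF finP ind2]) (use intp in auto)
  moreover have "expectation (\<lambda>\<omega>. \<Prod>p\<in>I\<times>{..<d}. X (fst p) (snd p) \<omega> ^ c (fst p) (snd p)) =
      (\<Prod>p\<in>I\<times>{..<d}. expectation (\<lambda>\<omega>. X (fst p) (snd p) \<omega> ^ c (fst p) (snd p)))"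
    by (rule indep_vars_lebesgue_integral[OF finP ind2]) (use intp in auto)
  moreover have "\<dots> = (\<Prod>p\<in>I\<times>{..<d}. \<mu> (fst p) (c (fst p) (snd p)))"
    using mom by (intro prod.cong refl) auto
  moreover have "\<dots> = (\<Prod>i\<in>I. \<Prod>j<d. \<mu> i (c i j))"
    by (simp add: prod.cartesian_product split_def)
  ultimately show ?thesis unfolding eq c_def by simp
qed

end

lemma mm_eq:
  fixes p q r s :: nat
  shows "of_bool (p=q \<and> r=s) + of_bool (p=r \<and> q=s) + of_bool (p=s \<and> q=r) + (gmom 4 - 3) * of_bool (p=q \<and> q=r \<and> r=s)
          = mm (\<lambda>i p q. 1) i p q r s"
    and "of_bool (p=q \<and> r=s) + of_bool (p=r \<and> q=s) + of_bool (p=s \<and> q=r) + (rmom 4 - 3) * of_bool (p=q \<and> q=r \<and> r=s)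
          = mm (\<lambda>i p q. of_bool (p \<noteq> q)) i p q r s"
  by (auto simp: mm_def gmom_vals rmom_vals)

lemma midx_empty: "midx {} d = {\<lambda>_. undefined}"
  unfolding midx_def by simp

lemma Wt_top:
  assumes "finite I"
  shows "Wt d I I B g = (\<Sum>c\<in>midx I d. B c c)\<^sup>2"
proof -
  have "ptrace d I B (\<lambda>_. undefined) (\<lambda>_. undefined) = (\<Sum>c\<in>midx I d. B c c)"
    unfolding ptrace_def
    by (intro sum.cong refl) (auto simp: midx_def PiE_iff extensional_def fun_eq_iff intro!: arg_cong2[where f=B])
  then show ?thesis unfolding Wt_def by (simp add: midx_empty)
qed

lemma Wt_le:
  assumes "\<And>i p q. 0 \<le> g i p q \<and> g i p q \<le> 1"
  shows "Wt d I S B g \<le> frob2 d (I - S) (ptrace d S B)"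
  unfolding Wt_def frob2_def
proof (intro sum_mono)
  fix a b
  have "(\<Prod>i\<in>I-S. g i (a i) (b i)) \<le> 1" by (rule prod_le_1) (use assms in auto)
  then show "(ptrace d S B a b)\<^sup>2 * (\<Prod>i\<in>I - S. g i (a i) (b i)) \<le> (ptrace d S B a b)\<^sup>2"
    by (simp add: mult_left_le)
qed

lemma Wt_one: "Wt d I S B (\<lambda>i p q. 1) = frob2 d (I - S) (ptrace d S B)"
  unfolding Wt_def frob2_def by simp


context prob_space begin

lemma main:
  fixes X :: "nat \<Rightarrow> nat \<Rightarrow> 'a \<Rightarrow> real" and A :: "(nat \<Rightarrow> nat) \<Rightarrow> (nat \<Rightarrow> nat) \<Rightarrow> real"
    and g :: "nat \<Rightarrow> nat \<Rightarrow> nat \<Rightarrow> real"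
  assumes indep: "indep_vars (\<lambda>_. borel) (\<lambda>p. X (fst p) (snd p)) ({1..k} \<times> {..<d})"
    and ty: "\<forall>i\<in>{1..k}. (\<forall>j<d. rademacher_rv M (X i j)) \<or> (\<forall>j<d. gaussian_rv M (X i j))"
    and g_def: "g = (\<lambda>i p q. if (\<forall>j<d. gaussian_rv M (X i j)) then 1 else of_bool (p \<noteq> q) :: real)"
  shows "variance (\<lambda>\<omega>. tquad d k A (\<lambda>i j. X i j \<omega>))
           = (\<Sum>S\<in>{S. S \<subset> {1..k}}. 2 ^ (k - card S) * Wt d {1..k} S (ptavg k A) g)"
proof -
  define I where "I = {1..k::nat}"
  have finI: "finite I" unfolding I_def by simp
  define MM where "MM = midx I d"
  define B where "B = ptavg k A"
  have invB: "\<And>R. R \<subseteq> I \<Longrightarrow> ptranspose R B = B" unfolding B_def I_def by (rule ptavg_inv)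
  define gs where "gs = (\<lambda>i. \<forall>j<d. gaussian_rv M (X i j))"
  have gi: "\<And>i p q. g i p q = (if gs i then 1 else of_bool (p \<noteq> q))" unfolding g_def gs_def by simp
  define \<mu> where "\<mu> = (\<lambda>i. if gs i then gmom else rmom)"
  have mom: "integrable M (\<lambda>\<omega>. X i j \<omega> ^ n) \<and> expectation (\<lambda>\<omega>. X i j \<omega> ^ n) = \<mu> i n"
    if "i \<in> I" "j < d" for i j n
  proof (cases "gs i")
    case True
    then show ?thesis using gauss_moment[of "X i j" n] that unfolding gs_def \<mu>_def by auto
  next
    case False
    then have "rademacher_rv M (X i j)" using ty that unfolding gs_def I_def by auto
    then show ?thesis using rad_moment[of "X i j" n] False unfolding \<mu>_def by auto
  qed
  have muv: "\<mu> i 0 = 1" "\<mu> i 1 = 0" "\<mu> i 2 = 1" "\<mu> i 3 = 0" for i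
    unfolding \<mu>_def by (simp_all add: gmom_def rmom_def)
  have indepI: "indep_vars (\<lambda>_. borel) (\<lambda>p. X (fst p) (snd p)) (I \<times> {..<d})" using indep unfolding I_def .
  have ts_ok: "\<forall>t\<in>set ts. \<forall>i\<in>I. t i < d" if "set ts \<subseteq> MM" for ts
    using that unfolding MM_def midx_def by auto
  define P2 where "P2 = (\<lambda>a b \<omega>. \<Prod>i\<in>I. prod_list (map (\<lambda>t. X i (t i) \<omega>) [a,b]))"
  define P4 where "P4 = (\<lambda>a b c e \<omega>. \<Prod>i\<in>I. prod_list (map (\<lambda>t. X i (t i) \<omega>) [a,b,c,e]))"
  let ?q = "\<lambda>\<omega>. tquad d k A (\<lambda>i j. X i j \<omega>)"
  have q_eq: "?q \<omega> = (\<Sum>p\<in>MM\<times>MM. B (fst p) (snd p) * P2 (fst p) (snd p) \<omega>)" for \<omega>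
  proof -
    have "?q \<omega> = tquad d k B (\<lambda>i j. X i j \<omega>)" unfolding B_def by (simp add: tquad_ptavg)
    also have "\<dots> = (\<Sum>a\<in>MM. \<Sum>b\<in>MM. B a b * P2 a b \<omega>)"
      unfolding tquad_def MM_def I_def P2_def by simp
    finally show ?thesis by (simp add: sum.cartesian_product split_def)
  qed
  have q2_eq: "(?q \<omega>)\<^sup>2 = (\<Sum>(a,b,c,e)\<in>MM\<times>MM\<times>MM\<times>MM. B a b * B c e * P4 a b c e \<omega>)" for \<omega>
  proof -
    have "?q \<omega> = tquad d k B (\<lambda>i j. X i j \<omega>)" unfolding B_def by (simp add: tquad_ptavg)
    also have "\<dots> = (\<Sum>a\<in>MM. \<Sum>b\<in>MM. B a b * P2 a b \<omega>)"
      unfolding tquad_def MM_def I_def P2_def by simp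
    finally have "(?q \<omega>)\<^sup>2 = (\<Sum>a\<in>MM. \<Sum>b\<in>MM. B a b * P2 a b \<omega>) * (\<Sum>c\<in>MM. \<Sum>e\<in>MM. B c e * P2 c e \<omega>)"
      by (simp add: power2_eq_square)
    also have "\<dots> = (\<Sum>a\<in>MM. \<Sum>b\<in>MM. \<Sum>c\<in>MM. \<Sum>e\<in>MM. (B a b * P2 a b \<omega>) * (B c e * P2 c e \<omega>))"
      unfolding sum_distrib_right unfolding sum_distrib_left ..
    also have "\<dots> = (\<Sum>a\<in>MM. \<Sum>b\<in>MM. \<Sum>c\<in>MM. \<Sum>e\<in>MM. B a b * B c e * P4 a b c e \<omega>)"
      unfolding P2_def P4_def by (simp add: prod.distrib mult_ac)
    finally show ?thesis by (simp add: sum.cartesian_product)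
  qed
  have jm: "integrable M (\<lambda>\<omega>. \<Prod>i\<in>I. prod_list (map (\<lambda>t. X i (t i) \<omega>) ts)) \<and>
         expectation (\<lambda>\<omega>. \<Prod>i\<in>I. prod_list (map (\<lambda>t. X i (t i) \<omega>) ts)) =
           (\<Prod>i\<in>I. \<Prod>j<d. \<mu> i (length (filter (\<lambda>t. t i = j) ts)))" if "set ts \<subseteq> MM" for ts
    by (rule joint_moment[OF finI indepI mom ts_ok[OF that]])
  have EP2: "integrable M (P2 a b) \<and> expectation (P2 a b) = of_bool (a = b)" if "a \<in> MM" "b \<in> MM" for a b
  proof -
    have "(\<Prod>i\<in>I. \<Prod>j<d. \<mu> i (length (filter (\<lambda>t. t i = j) [a,b]))) = (\<Prod>i\<in>I. of_bool (a i = b i))"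
    proof (intro prod.cong refl)
      fix i assume i: "i \<in> I"
      have "a i < d" "b i < d" using that i unfolding MM_def midx_def by auto
      then have "(\<Prod>j<d. \<mu> i (length (filter (\<lambda>x. x = j) [a i, b i]))) = of_bool (a i = b i)"
        by (intro L2) (auto simp: muv muv(2)[unfolded One_nat_def])
      moreover have "length (filter (\<lambda>t. t i = j) [a,b]) = length (filter (\<lambda>x. x = j) [a i, b i])" for j by simp
      ultimately show "(\<Prod>j<d. \<mu> i (length (filter (\<lambda>t. t i = j) [a,b]))) = of_bool (a i = b i)" by (simp only:)
    qed
    also have "\<dots> = of_bool (a = b)"
    proof -
      have "(\<forall>i\<in>I. a i = b i) = (a = b)" using that unfolding MM_def midx_def by (auto intro: PiE_ext)
      then show ?thesis unfolding prod_of_bool[OF finI] by simp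
    qed
    finally show ?thesis using jm[of "[a,b]"] that unfolding P2_def by auto
  qed
  have EP4: "integrable M (P4 a b c e) \<and> expectation (P4 a b c e) = (\<Prod>i\<in>I. mm g i (a i) (b i) (c i) (e i))"
    if "a \<in> MM" "b \<in> MM" "c \<in> MM" "e \<in> MM" for a b c e
  proof -
    have "(\<Prod>i\<in>I. \<Prod>j<d. \<mu> i (length (filter (\<lambda>t. t i = j) [a,b,c,e]))) = (\<Prod>i\<in>I. mm g i (a i) (b i) (c i) (e i))"
    proof (intro prod.cong refl)
      fix i assume i: "i \<in> I"
      have "a i < d" "b i < d" "c i < d" "e i < d" using that i unfolding MM_def midx_def by auto
      then have "(\<Prod>j<d. \<mu> i (length (filter (\<lambda>x. x = j) [a i, b i, c i, e i]))) =
          of_bool (a i=b i \<and> c i=e i) + of_bool (a i=c i \<and> b i=e i) + of_bool (a i=e i \<and> b i=c i) + (\<mu> i 4 - 3) * of_bool (a i=b i \<and> b i=c i \<and> c i=e i)"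
        by (intro L4) (auto simp: muv muv(2)[unfolded One_nat_def])
      also have "\<dots> = mm g i (a i) (b i) (c i) (e i)"
      proof (cases "gs i")
        case True
        have "mm g i p q r s = mm (\<lambda>i p q. 1) i p q r s" for p q r s by (simp add: mm_def gi True)
        then show ?thesis using mm_eq(1) True by (simp add: \<mu>_def)
      next
        case False
        have "mm g i p q r s = mm (\<lambda>i p q. of_bool (p \<noteq> q)) i p q r s" for p q r s by (simp add: mm_def gi False)
        then show ?thesis using mm_eq(2) False by (simp add: \<mu>_def)
      qed
      moreover have "length (filter (\<lambda>t. t i = j) [a,b,c,e]) = length (filter (\<lambda>x. x = j) [a i, b i, c i, e i])" for j by simp
      ultimately show "(\<Prod>j<d. \<mu> i (length (filter (\<lambda>t. t i = j) [a,b,c,e]))) = mm g i (a i) (b i) (c i) (e i)" by (simp only:)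
    qed
    then show ?thesis using jm[of "[a,b,c,e]"] that unfolding P4_def by auto
  qed
  have finMM: "finite MM" unfolding MM_def using finI by simp
  have int_q: "integrable M ?q"
    unfolding q_eq by (rule Bochner_Integration.integrable_sum) (use EP2 in \<open>auto intro!: integrable_mult_right\<close>)
  have E_q: "expectation ?q = (\<Sum>a\<in>MM. B a a)"
  proof -
    have "expectation ?q = (\<Sum>p\<in>MM\<times>MM. expectation (\<lambda>\<omega>. B (fst p) (snd p) * P2 (fst p) (snd p) \<omega>))"
      unfolding q_eq by (rule Bochner_Integration.integral_sum) (use EP2 in auto)
    also have "\<dots> = (\<Sum>p\<in>MM\<times>MM. B (fst p) (snd p) * of_bool (fst p = snd p))"
      by (intro sum.cong refl) (use EP2 in auto)
    also have "\<dots> = (\<Sum>a\<in>MM. \<Sum>b\<in>MM. B a b * of_bool (a = b))"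
      by (simp add: sum.cartesian_product split_def)
    also have "\<dots> = (\<Sum>a\<in>MM. B a a)"
      using finMM by (intro sum.cong refl) (simp add: of_bool_def if_distrib sum.delta cong: if_cong)
    finally show ?thesis .
  qed
  have int_q2: "integrable M (\<lambda>\<omega>. (?q \<omega>)\<^sup>2)"
    unfolding q2_eq by (rule Bochner_Integration.integrable_sum) (use EP4 in \<open>auto intro!: integrable_mult_right\<close>)
  have E_q2: "expectation (\<lambda>\<omega>. (?q \<omega>)\<^sup>2) = (\<Sum>S\<in>Pow I. 2 ^ card (I - S) * Wt d I S B g)"
  proof -
    have "expectation (\<lambda>\<omega>. (?q \<omega>)\<^sup>2) = (\<Sum>x\<in>MM\<times>MM\<times>MM\<times>MM. expectation (\<lambda>\<omega>. case x of (a,b,c,e) \<Rightarrow> B a b * B c e * P4 a b c e \<omega>))"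
      unfolding q2_eq by (rule Bochner_Integration.integral_sum) (use EP4 in \<open>auto intro!: integrable_mult_right\<close>)
    also have "\<dots> = (\<Sum>(a,b,c,e)\<in>MM\<times>MM\<times>MM\<times>MM. B a b * B c e * (\<Prod>i\<in>I. mm g i (a i) (b i) (c i) (e i)))"
      by (intro sum.cong refl) (use EP4 in auto)
    also have "\<dots> = (\<Sum>S\<in>Pow I. 2 ^ card (I - S) * Wt d I S B g)"
      unfolding MM_def by (rule expand[OF finI invB])
    finally show ?thesis .
  qed
  have "variance ?q = (\<Sum>S\<in>Pow I. 2 ^ card (I - S) * Wt d I S B g) - (\<Sum>a\<in>MM. B a a)\<^sup>2"
    using variance_eq[OF int_q int_q2] E_q E_q2 by simp
  also have "Pow I = insert I {S. S \<subset> I}" by auto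
  also have "(\<Sum>S\<in>insert I {S. S \<subset> I}. 2 ^ card (I - S) * Wt d I S B g) =
      Wt d I I B g + (\<Sum>S\<in>{S. S \<subset> I}. 2 ^ card (I - S) * Wt d I S B g)"
    using finI by (subst sum.insert) (auto intro: finite_subset[of _ "Pow I"])
  also have "Wt d I I B g = (\<Sum>a\<in>MM. B a a)\<^sup>2" unfolding MM_def by (rule Wt_top[OF finI])
  also have "(\<Sum>S\<in>{S. S \<subset> I}. 2 ^ card (I - S) * Wt d I S B g) = (\<Sum>S\<in>{S. S \<subset> I}. 2 ^ (k - card S) * Wt d I S B g)"
    by (intro sum.cong refl) (auto simp: I_def card_Diff_subset finite_subset)
  finally show ?thesis unfolding I_def B_def by simp
qed

end

theorem theorem1:
  fixes M :: "'s measure" and d k :: nat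
    and A :: "(nat \<Rightarrow> nat) \<Rightarrow> (nat \<Rightarrow> nat) \<Rightarrow> real"
    and X :: "nat \<Rightarrow> nat \<Rightarrow> 's \<Rightarrow> real"
  assumes "prob_space M"
    and "prob_space.indep_vars M (\<lambda>_. borel) (\<lambda>p. X (fst p) (snd p)) ({1..k} \<times> {..<d})"
    and "\<forall>i\<in>{1..k}. (\<forall>j<d. rademacher_rv M (X i j)) \<or> (\<forall>j<d. gaussian_rv M (X i j))"
  shows "prob_space.variance M (\<lambda>\<omega>. tquad d k A (\<lambda>i j. X i j \<omega>))
           \<le> (\<Sum>S\<in>{S. S \<subset> {1..k}}. 2 ^ (k - card S) * frob2 d ({1..k} - S) (ptrace d S (ptavg k A)))
       \<and> ((\<forall>i\<in>{1..k}. \<forall>j<d. gaussian_rv M (X i j)) \<longrightarrow>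
           prob_space.variance M (\<lambda>\<omega>. tquad d k A (\<lambda>i j. X i j \<omega>))
           = (\<Sum>S\<in>{S. S \<subset> {1..k}}. 2 ^ (k - card S) * frob2 d ({1..k} - S) (ptrace d S (ptavg k A))))"
proof -
  define g where "g = (\<lambda>i (p::nat) (q::nat). if (\<forall>j<d. gaussian_rv M (X i j)) then 1 else of_bool (p \<noteq> q) :: real)"
  have V: "prob_space.variance M (\<lambda>\<omega>. tquad d k A (\<lambda>i j. X i j \<omega>))
           = (\<Sum>S\<in>{S. S \<subset> {1..k}}. 2 ^ (k - card S) * Wt d {1..k} S (ptavg k A) g)"
    by (rule prob_space.main[OF assms(1) assms(2) assms(3) g_def])
  have g01: "0 \<le> g i p q \<and> g i p q \<le> 1" for i p q unfolding g_def by auto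
  have le: "(\<Sum>S\<in>{S. S \<subset> {1..k}}. 2 ^ (k - card S) * Wt d {1..k} S (ptavg k A) g)
      \<le> (\<Sum>S\<in>{S. S \<subset> {1..k}}. 2 ^ (k - card S) * frob2 d ({1..k} - S) (ptrace d S (ptavg k A)))"
    by (intro sum_mono mult_left_mono Wt_le g01) auto
  have eq: "(\<Sum>S\<in>{S. S \<subset> {1..k}}. 2 ^ (k - card S) * Wt d {1..k} S (ptavg k A) g)
      = (\<Sum>S\<in>{S. S \<subset> {1..k}}. 2 ^ (k - card S) * frob2 d ({1..k} - S) (ptrace d S (ptavg k A)))"
    if G: "\<forall>i\<in>{1..k}. \<forall>j<d. gaussian_rv M (X i j)"
  proof (intro sum.cong refl arg_cong2[where f="(*)"])
    fix S
    have "Wt d {1..k} S (ptavg k A) g = Wt d {1..k} S (ptavg k A) (\<lambda>i p q. 1)"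
      unfolding Wt_def using G by (intro sum.cong refl arg_cong2[where f="(*)"] prod.cong) (simp_all add: g_def)
    then show "Wt d {1..k} S (ptavg k A) g = frob2 d ({1..k} - S) (ptrace d S (ptavg k A))"
      by (simp add: Wt_one)
  qed
  show ?thesis using V le eq by simp
qed

end
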